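(* Let $p$ be a complex polynomial of degree $d \geq 2$, and let $H_p = \operatorname{conv} J_p$ be the convex hull of its Julia set. Then $p^{-1}(H_p) \subset H_p$.
   Context: For a polynomial $p$ viewed as a holomorphic self-map of the Riemann sphere $\widehat{\mathbb{C}}$ (with $p(\infty)=\infty$), the Fatou set $F_p$ is the maximal open subset of $\widehat{\mathbb{C}}$ on which the iterates $\{p^{\circ n}\}_{n\in\mathbb{N}}$ form an equicontinuous family, and the Julia set $J_p$ is the complement $\widehat{\mathbb{C}}\setminus F_p$; for polynomials $J_p$ is a nonempty compact subset of $\mathbb{C}$. $\operatorname{conv} X$ denotes the convex hull of $X \subset \mathbb{C}\cong\mathbb{R}^2$. *)

theory Defs
  imports "HOL-Analysis.Analysis" "HOL-Computational_Algebra.Polynomial"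
begin

text \<open>Chordal (spherical) metric on the Riemann sphere, restricted to finite points.\<close>
definition chordal_dist :: "complex \<Rightarrow> complex \<Rightarrow> real" where
  "chordal_dist a b = 2 * cmod (a - b) / (sqrt (1 + (cmod a)\<^sup>2) * sqrt (1 + (cmod b)\<^sup>2))"

definition iterates_equicontinuous_on :: "complex set \<Rightarrow> (complex \<Rightarrow> complex) \<Rightarrow> bool" where
  "iterates_equicontinuous_on U f \<longleftrightarrow>
     (\<forall>z\<in>U. \<forall>e>0. \<exists>d>0. \<forall>n::nat. \<forall>w\<in>U.
        cmod (w - z) < d \<longrightarrow> chordal_dist ((f ^^ n) w) ((f ^^ n) z) < e)"

text \<open>Finite part of the Fatou set: union of all open sets on which the iterates are equicontinuous.
  (For a polynomial of degree at least 2, \<infinity> always lies in the Fatou set.)\<close>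
definition fatou_set :: "complex poly \<Rightarrow> complex set" where
  "fatou_set p = \<Union>{U. open U \<and> iterates_equicontinuous_on U (poly p)}"

definition julia_set :: "complex poly \<Rightarrow> complex set" where
  "julia_set p = UNIV - fatou_set p"

end

theory Submission imports Defs "HOL-Complex_Analysis.Complex_Analysis" "HOL-Computational_Algebra.Fundamental_Theorem_Algebra"
begin

lemma logderiv_pos:
  fixes q :: "complex poly"
  shows "degree q = n \<Longrightarrow> n \<ge> 1 \<Longrightarrow> poly q x \<noteq> 0 \<Longrightarrow>
    (\<forall>r. poly q r = 0 \<longrightarrow> Re (a / (x - r)) > 0) \<Longrightarrow>
    Re (a * (poly (pderiv q) x / poly q x)) > 0"
proof (induction n arbitrary: q)
  case 0
  then show ?case by simp
next
  case (Suc m)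
  have "\<not> constant (poly q)"
    using Suc.prems(1) by (metis constant_degree Suc_neq_Zero)
  then obtain r where r: "poly q r = 0" using fundamental_theorem_of_algebra by blast
  then obtain s where qs: "q = [:-r,1:] * s" using poly_eq_0_iff_dvd by blast
  have s0: "s \<noteq> 0" using qs Suc.prems by auto
  have "degree q = degree [:-r,1::complex:] + degree s" unfolding qs
    by (rule degree_mult_eq) (use s0 in auto)
  then have ds: "degree s = m" using Suc.prems(1) by simp
  have xr: "x - r \<noteq> 0" using Suc.prems(3) r by auto
  have sx: "poly s x \<noteq> 0" using Suc.prems(3) qs by auto
  have pd: "pderiv q = s + [:-r,1:] * pderiv s"
    unfolding qs pderiv_mult by (simp add: pderiv_pCons)
  have eq: "poly (pderiv q) x / poly q x = 1 / (x - r) + poly (pderiv s) x / poly s x"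
  proof -
    have 1: "poly (pderiv q) x = poly s x + (x - r) * poly (pderiv s) x" by (simp add: pd algebra_simps)
    have 2: "poly q x = (x - r) * poly s x" by (simp add: qs algebra_simps)
    show ?thesis unfolding 1 2 using xr sx by (simp add: field_simps)
  qed
  have r1: "Re (a / (x - r)) > 0" using Suc.prems(4) r by blast
  show ?case
  proof (cases "m = 0")
    case True
    then have "pderiv s = 0" using ds pderiv_eq_0_iff by blast
    then show ?thesis using eq r1 by simp
  next
    case False
    have "Re (a * (poly (pderiv s) x / poly s x)) > 0"
      apply (rule Suc.IH)
      using False ds sx Suc.prems(4) qs by auto
    then show ?thesis using eq r1 by (simp add: distrib_left)
  qed
qed

lemma poly_not_constant_on:
  fixes p :: "complex poly"
  assumes "degree p \<ge> 1"
  shows "\<not> poly p constant_on UNIV"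
proof
  assume "poly p constant_on UNIV"
  then have "constant (poly p)" unfolding constant_on_def constant_def by auto
  then have "degree p = 0" using constant_degree by blast
  then show False using assms by simp
qed

lemma poly_open_image:
  fixes p :: "complex poly"
  assumes "degree p \<ge> 1" "open U"
  shows "open (poly p ` U)"
  by (rule open_mapping_thm[where S=UNIV]) (use assms poly_not_constant_on in \<open>auto intro: holomorphic_intros\<close>)

lemma fatou_forward:
  fixes p :: "complex poly"
  assumes "degree p \<ge> 1" "z \<in> fatou_set p"
  shows "poly p z \<in> fatou_set p"
proof -
  obtain U where U: "open U" "z \<in> U" "iterates_equicontinuous_on U (poly p)"
    using assms(2) unfolding fatou_set_def by blast
  define V where "V = poly p ` U"
  have oV: "open V" unfolding V_def using poly_open_image assms U by blast
  have "iterates_equicontinuous_on V (poly p)"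
    unfolding iterates_equicontinuous_on_def
  proof (intro ballI allI impI)
    fix w0 e assume w0: "w0 \<in> V" and e: "(e::real) > 0"
    then obtain u0 where u0: "u0 \<in> U" "w0 = poly p u0" unfolding V_def by blast
    obtain d1 where d1: "d1 > 0" "\<forall>n. \<forall>u\<in>U. cmod (u - u0) < d1 \<longrightarrow>
        chordal_dist ((poly p ^^ n) u) ((poly p ^^ n) u0) < e"
      using U(3) u0(1) e unfolding iterates_equicontinuous_on_def by blast
    obtain d2 where d2: "d2 > 0" "ball u0 d2 \<subseteq> U" using U(1) u0(1) open_contains_ball by blast
    define d3 where "d3 = min d1 d2"
    have d3: "d3 > 0" using d1 d2 unfolding d3_def by auto
    have "open (poly p ` ball u0 d3)" using poly_open_image assms by blast
    moreover have "w0 \<in> poly p ` ball u0 d3" using u0 d3 by auto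
    ultimately obtain d where d: "d > 0" "ball w0 d \<subseteq> poly p ` ball u0 d3"
      using open_contains_ball by blast
    show "\<exists>d>0. \<forall>n. \<forall>w\<in>V. cmod (w - w0) < d \<longrightarrow>
        chordal_dist ((poly p ^^ n) w) ((poly p ^^ n) w0) < e"
    proof (intro exI[of _ d] conjI allI ballI impI)
      fix n w assume "w \<in> V" "cmod (w - w0) < d"
      then have "w \<in> ball w0 d" by (simp add: dist_norm norm_minus_commute)
      then obtain u where u: "u \<in> ball u0 d3" "w = poly p u" using d by blast
      have uU: "u \<in> U" using u d2 unfolding d3_def by auto
      have "cmod (u - u0) < d1" using u unfolding d3_def by (simp add: dist_norm norm_minus_commute)
      then have "chordal_dist ((poly p ^^ Suc n) u) ((poly p ^^ Suc n) u0) < e" using d1 uU by blast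
      then show "chordal_dist ((poly p ^^ n) w) ((poly p ^^ n) w0) < e"
        using u u0 by (simp add: funpow_Suc_right del: funpow.simps)
    qed (use d in auto)
  qed
  then show ?thesis unfolding fatou_set_def using oV U(2) V_def by blast
qed

lemma chordal_le1: "chordal_dist a b \<le> 2 * cmod (a - b)"
proof -
  have 1: "1 \<le> sqrt (1 + (cmod a)\<^sup>2)" "1 \<le> sqrt (1 + (cmod b)\<^sup>2)" by auto
  have "1 * 1 \<le> sqrt (1 + (cmod a)\<^sup>2) * sqrt (1 + (cmod b)\<^sup>2)"
    by (rule mult_mono) (use 1 in auto)
  then show ?thesis unfolding chordal_dist_def
    by (simp add: divide_le_eq) (smt (verit, ccfv_SIG) mult_le_cancel_left1 norm_ge_zero)
qed

lemma chordal_le2: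
  assumes "a \<noteq> 0" "b \<noteq> 0"
  shows "chordal_dist a b \<le> 2 / cmod a + 2 / cmod b"
proof -
  have sa: "cmod a \<le> sqrt (1 + (cmod a)\<^sup>2)" by (simp add: real_le_rsqrt)
  have sb: "cmod b \<le> sqrt (1 + (cmod b)\<^sup>2)" by (simp add: real_le_rsqrt)
  have pa: "cmod a > 0" "cmod b > 0" using assms by auto
  have "cmod a * cmod b \<le> sqrt (1 + (cmod a)\<^sup>2) * sqrt (1 + (cmod b)\<^sup>2)"
    using sa sb pa by (simp add: mult_mono)
  then have "chordal_dist a b \<le> 2 * cmod (a - b) / (cmod a * cmod b)"
    unfolding chordal_dist_def using pa
    by (intro divide_left_mono) (auto intro!: mult_pos_pos add_pos_nonneg)
  also have "\<dots> \<le> 2 * (cmod a + cmod b) / (cmod a * cmod b)"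
    using pa by (intro divide_right_mono mult_left_mono norm_triangle_ineq4) auto
  also have "\<dots> = 2 / cmod a + 2 / cmod b" using pa by (simp add: field_simps)
  finally show ?thesis .
qed

lemma poly_growth:
  fixes p :: "complex poly"
  assumes "degree p \<ge> 2"
  shows "\<exists>R>0. \<forall>z. R \<le> cmod z \<longrightarrow> 2 * cmod z \<le> cmod (poly p z)"
proof -
  obtain a q where pq: "p = pCons a q" by (cases p) auto
  have dq: "degree q \<ge> 1" using assms pq by (cases "q = 0") auto
  obtain b s where qs: "q = pCons b s" by (cases q) auto
  have s0: "s \<noteq> 0" using dq qs by auto
  obtain r where r: "\<forall>z. r \<le> norm z \<longrightarrow> 3 \<le> norm (poly (pCons b s) z)"
    using poly_infinity[OF s0] by blast
  define R where "R = max (max r (cmod a)) 1"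
  have "\<forall>z. R \<le> cmod z \<longrightarrow> 2 * cmod z \<le> cmod (poly p z)"
  proof (intro allI impI)
    fix z assume z: "R \<le> cmod z"
    then have "3 \<le> cmod (poly q z)" using r qs unfolding R_def by auto
    then have "3 * cmod z \<le> cmod (z * poly q z)" by (simp add: norm_mult mult_left_mono mult.commute)
    moreover have "cmod (z * poly q z) \<le> cmod (poly p z) + cmod a"
      using norm_triangle_ineq4[of "a + z * poly q z" a] pq by simp
    moreover have "cmod a \<le> cmod z" using z unfolding R_def by auto
    ultimately show "2 * cmod z \<le> cmod (poly p z)" by linarith
  qed
  then show ?thesis by (intro exI[of _ R]) (auto simp: R_def)
qed

lemma iter_growth:
  fixes p :: "complex poly"
  assumes R: "R > 0" "\<forall>z. R \<le> cmod z \<longrightarrow> 2 * cmod z \<le> cmod (poly p z)"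
    and z: "R \<le> cmod z"
  shows "2 ^ n * cmod z \<le> cmod ((poly p ^^ n) z)"
proof (induction n)
  case 0 then show ?case by simp
next
  case (Suc n)
  have "R \<le> cmod ((poly p ^^ n) z)"
    using Suc z R(1) by (smt (verit) mult_le_cancel_right1 one_le_power norm_ge_zero)
  then have "2 * cmod ((poly p ^^ n) z) \<le> cmod ((poly p ^^ Suc n) z)" using R by simp
  then show ?case using Suc by simp
qed

lemma iter_cont: "continuous_on UNIV (poly (p::complex poly) ^^ n)"
proof (induction n)
  case 0 then show ?case by (simp add: continuous_on_id id_def)
next
  case (Suc n)
  have "continuous_on UNIV (\<lambda>x. poly p ((poly p ^^ n) x))"
    by (rule continuous_on_poly) (use Suc in auto)
  then show ?case by simp
qed

lemma far_fatou:
  fixes p :: "complex poly"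
  assumes "degree p \<ge> 2"
  shows "\<exists>R. \<forall>z. R < cmod z \<longrightarrow> z \<in> fatou_set p"
proof -
  obtain R where R: "R > 0" "\<forall>z. R \<le> cmod z \<longrightarrow> 2 * cmod z \<le> cmod (poly p z)"
    using poly_growth[OF assms] by blast
  define U where "U = {z. R < cmod z}"
  have oU: "open U" unfolding U_def by (intro open_Collect_less continuous_intros)
  have "iterates_equicontinuous_on U (poly p)"
    unfolding iterates_equicontinuous_on_def
  proof (intro ballI allI impI)
    fix z e assume z: "z \<in> U" and e: "(e::real) > 0"
    obtain N where N: "4 / (e * R) < 2 ^ N" using real_arch_pow[of 2 "4 / (e * R)"] by auto
    have big: "chordal_dist ((poly p ^^ n) w) ((poly p ^^ n) z) < e"
      if "n \<ge> N" "w \<in> U" for n w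
    proof -
      have gw: "2 ^ n * R \<le> cmod ((poly p ^^ n) w)"
        using iter_growth[OF R, of w n] that(2) unfolding U_def
        by (smt (verit) mem_Collect_eq mult_left_mono zero_le_power)
      have gz: "2 ^ n * R \<le> cmod ((poly p ^^ n) z)"
        using iter_growth[OF R, of z n] z unfolding U_def
        by (smt (verit) mem_Collect_eq mult_left_mono zero_le_power)
      have pos: "2 ^ n * R > 0" using R by simp
      have "chordal_dist ((poly p ^^ n) w) ((poly p ^^ n) z)
          \<le> 2 / cmod ((poly p ^^ n) w) + 2 / cmod ((poly p ^^ n) z)"
        using gw gz pos by (intro chordal_le2) auto
      also have "\<dots> \<le> 2 / (2 ^ n * R) + 2 / (2 ^ n * R)"
        using gw gz pos by (intro add_mono divide_left_mono) (auto intro!: mult_pos_pos)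
      also have "\<dots> = 4 / (2 ^ n * R)" by simp
      also have "\<dots> \<le> 4 / (2 ^ N * R)"
        using that(1) R by (intro divide_left_mono mult_right_mono) (auto intro: power_increasing)
      also have "\<dots> < e" using N e R by (simp add: field_simps)
      finally show ?thesis .
    qed
    have "\<forall>n\<in>{..<N}. eventually (\<lambda>w. dist ((poly p ^^ n) w) ((poly p ^^ n) z) < e / 2) (at z)"
    proof
      fix n
      have "isCont (poly p ^^ n) z" using iter_cont[where p=p and n=n] continuous_on_eq_continuous_at by blast
      then have "((poly p ^^ n) \<longlongrightarrow> (poly p ^^ n) z) (at z)" by (simp add: isCont_def)
      then show "eventually (\<lambda>w. dist ((poly p ^^ n) w) ((poly p ^^ n) z) < e / 2) (at z)"
        using e unfolding tendsto_iff by (metis half_gt_zero)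
    qed
    then have "eventually (\<lambda>w. \<forall>n\<in>{..<N}. dist ((poly p ^^ n) w) ((poly p ^^ n) z) < e / 2) (at z)"
      by (intro eventually_ball_finite) auto
    then obtain d where d: "d > 0" "\<forall>w. w \<noteq> z \<and> dist w z < d \<longrightarrow>
        (\<forall>n\<in>{..<N}. dist ((poly p ^^ n) w) ((poly p ^^ n) z) < e / 2)"
      unfolding eventually_at by auto
    show "\<exists>d>0. \<forall>n. \<forall>w\<in>U. cmod (w - z) < d \<longrightarrow>
        chordal_dist ((poly p ^^ n) w) ((poly p ^^ n) z) < e"
    proof (intro exI[of _ d] conjI allI ballI impI)
      fix n w assume w: "w \<in> U" "cmod (w - z) < d"
      show "chordal_dist ((poly p ^^ n) w) ((poly p ^^ n) z) < e"
      proof (cases "n \<ge> N")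
        case True then show ?thesis using big w by blast
      next
        case False
        show ?thesis
        proof (cases "w = z")
          case True then show ?thesis using e by (simp add: chordal_dist_def)
        next
          case wz: False
          have "dist ((poly p ^^ n) w) ((poly p ^^ n) z) < e / 2"
            using d False wz w by (auto simp: dist_norm)
          then show ?thesis using chordal_le1[of "(poly p ^^ n) w" "(poly p ^^ n) z"]
            by (simp add: dist_norm)
        qed
      qed
    qed (use d in auto)
  qed
  then have "U \<subseteq> fatou_set p" unfolding fatou_set_def using oU by blast
  then show ?thesis unfolding U_def by blast
qed

lemma re_div_pos:
  fixes c u :: complex
  assumes "inner c u > 0"
  shows "Re (c / u) > 0"
proof -
  have u: "u \<noteq> 0" using assms by auto
  have "Re (c / u) = inner c u / (cmod u)\<^sup>2"
    by (simp add: Re_divide inner_complex_def cmod_power2)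
  then show ?thesis using assms u by simp
qed

lemma re_inv_pos:
  fixes a S :: complex
  assumes "Re (a * S) > 0"
  shows "Re (cnj a * (1 / S)) > 0"
proof -
  have S: "S \<noteq> 0" using assms by auto
  have "Re (cnj a * (1 / S)) = Re (a * S) / (cmod S)\<^sup>2"
    by (simp add: Re_divide algebra_simps cmod_power2)
  then show ?thesis using assms S by simp
qed

theorem mainTheorem1:
  fixes p :: "complex poly"
  assumes "degree p \<ge> 2"
  shows "poly p -` (convex hull (julia_set p)) \<subseteq> convex hull (julia_set p)"
proof
  fix x assume x: "x \<in> poly p -` (convex hull (julia_set p))"
  define J where "J = julia_set p"
  define H where "H = convex hull J"
  have d1: "degree p \<ge> 1" using assms by simp
  have "open (fatou_set p)" unfolding fatou_set_def by auto
  then have cJ: "closed J" unfolding J_def julia_set_def by (simp add: Compl_eq_Diff_UNIV[symmetric] closed_Compl)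
  obtain R where R: "\<forall>z. R < cmod z \<longrightarrow> z \<in> fatou_set p" using far_fatou[OF assms] by blast
  have "J \<subseteq> cball 0 R" unfolding J_def julia_set_def using R by (force simp: dist_norm)
  then have "bounded J" using bounded_cball bounded_subset by blast
  then have "compact H" unfolding H_def using cJ compact_convex_hull compact_eq_bounded_closed by blast
  then have clH: "closed H" by (rule compact_imp_closed)
  have inv: "r \<in> J" if "poly p r \<in> J" for r
    using fatou_forward[OF d1, of r] that unfolding J_def julia_set_def by blast
  have JH: "J \<subseteq> H" unfolding H_def by (rule hull_subset)
  show "x \<in> convex hull (julia_set p)"
  proof (rule ccontr)
    assume "x \<notin> convex hull (julia_set p)"
    then have xH: "x \<notin> H" unfolding H_def J_def .
    obtain c b where cb: "inner c x < b" "\<forall>y\<in>H. inner c y > b"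
      using separating_hyperplane_closed_point[OF _ clH xH] unfolding H_def by auto
    define a where "a = - c"
    have roots: "Re (a / (x - r)) > 0" if "r \<in> H" for r
    proof -
      have "inner c (r - x) > 0" using cb that by (force simp: inner_diff_right)
      then have "Re (c / (r - x)) > 0" by (rule re_div_pos)
      moreover have "a / (x - r) = c / (r - x)" unfolding a_def
        by (metis divide_minus_left minus_diff_eq minus_divide_right)
      ultimately show ?thesis by simp
    qed
    define D where "D = poly (pderiv p) x"
    define K where "K = {w. Re (cnj a * ((poly p x - w) / D)) > 0}"
    have JK: "J \<subseteq> K"
    proof
      fix w assume w: "w \<in> J"
      define q where "q = p - [:w:]"
      have dq: "degree q = degree p"
      proof -
        have "q = p + (- [:w:])" unfolding q_def by simp
        also have "degree \<dots> = degree p" using assms by (intro degree_add_eq_left) simp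
        finally show ?thesis .
      qed
      have pq: "pderiv q = pderiv p" unfolding q_def by (simp add: pderiv_diff pderiv_pCons)
      have xw: "poly q x \<noteq> 0" unfolding q_def using w JH xH inv by auto
      have "Re (a * (poly (pderiv q) x / poly q x)) > 0"
      proof (rule logderiv_pos[OF dq])
        show "1 \<le> degree p" using d1 .
        show "poly q x \<noteq> 0" using xw .
        show "\<forall>r. poly q r = 0 \<longrightarrow> 0 < Re (a / (x - r))"
        proof (intro allI impI)
          fix r assume "poly q r = 0"
          then have "poly p r \<in> J" using w unfolding q_def by simp
          then show "0 < Re (a / (x - r))" using inv JH roots by blast
        qed
      qed
      then have "Re (a * (D / (poly p x - w))) > 0"
        using pq unfolding q_def D_def by simp
      then have "Re (cnj a * (1 / (D / (poly p x - w)))) > 0"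
        by (rule re_inv_pos)
      then show "w \<in> K" unfolding K_def by simp
    qed
    have "convex K"
    proof -
      define k where "k = cnj a / D"
      have "K = {w. inner (cnj k) w < Re (k * poly p x)}"
      proof -
        have "Re (cnj a * ((poly p x - w) / D)) = Re (k * poly p x) - inner (cnj k) w" for w
        proof -
          have "cnj a * ((poly p x - w) / D) = k * poly p x - k * w"
            unfolding k_def by (simp add: field_simps diff_divide_distrib)
          moreover have "inner (cnj k) w = Re (k * w)" by (simp add: inner_complex_def)
          ultimately show ?thesis by simp
        qed
        then show ?thesis unfolding K_def by auto
      qed
      then show ?thesis by (simp add: convex_halfspace_lt)
    qed
    then have "H \<subseteq> K" unfolding H_def using JK by (simp add: hull_minimal)
    moreover have "poly p x \<in> H" using x unfolding H_def J_def by simp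
    ultimately show False unfolding K_def by force
  qed
qed

end
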